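(* Let $n_b\ge 1$, $d_l\ge 4$, $L\ge 4$, $M\ge 1$ be integers, and let $H$ be a quasi-cyclic SC-LDPC parity-check matrix with parameters $(n_b,d_l,L,M)$ and reuse $T=2$ (as defined in the context). Then, for every choice of the shift values $p_{x,y}$ satisfying the reuse-$2$ condition, the Tanner graph of $H$ contains a cycle of length at most $8$; in particular its girth is at most $8$.
   Context: Quasi-cyclic SC-LDPC matrix: fix integers $n_b\ge1$ (bit nodes per protograph; one check node per protograph), $d_l\ge 2$, $L\ge1$, $M\ge1$. $H$ is a binary block matrix with $L+d_l-1$ block rows (indexed $x=1,\dots,L+d_l-1$) and $n_bL$ block columns (indexed $y=1,\dots,n_bL$), each block of size $M\times M$. For a block column $y$ put $t(y)=\lceil y/n_b\rceil$. Block $(x,y)$ is the all-zero matrix unless $t(y)\le x\le t(y)+d_l-1$, in which case it equals the circulant permutation matrix $I_{(p_{x,y})}$ for a shift value $p_{x,y}\in\{0,\dots,M-1\}$; here $I_{(p)}$ is the $M\times M$ matrix whose row $r$ ($0\le r\le M-1$) has a single $1$, in column $(r+p)\bmod M$, and zeros elsewhere. Reuse-$T$ condition (periodic time-variant construction with period $T$): $p_{x+T,\,y+Tn_b}=p_{x,y}$ whenever both $(x,y)$ and $(x+T,y+Tn_b)$ are nonzero blocks of $H$; otherwise the shift values are arbitrary. The Tanner graph of $H$ is the bipartite graph with one bit node per column and one check node per row of $H$, a bit node and check node being adjacent iff the corresponding entry of $H$ is $1$. The girth is the length of a shortest cycle in the Tanner graph. *)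

theory Defs
  imports Main
begin

definition tblk :: "nat \<Rightarrow> nat \<Rightarrow> nat" where
  "tblk nb y = (y + nb - 1) div nb"

text \<open>Block (x,y) of H is a (nonzero) circulant permutation matrix.\<close>
definition nz_block :: "nat \<Rightarrow> nat \<Rightarrow> nat \<Rightarrow> nat \<Rightarrow> nat \<Rightarrow> bool" where
  "nz_block nb dl L x y \<longleftrightarrow>
     1 \<le> x \<and> x \<le> L + dl - 1 \<and> 1 \<le> y \<and> y \<le> nb * L \<and>
     tblk nb y \<le> x \<and> x \<le> tblk nb y + dl - 1"

definition H_entry :: "nat \<Rightarrow> nat \<Rightarrow> nat \<Rightarrow> nat \<Rightarrow> (nat \<Rightarrow> nat \<Rightarrow> nat)
    \<Rightarrow> nat \<Rightarrow> nat \<Rightarrow> nat \<Rightarrow> nat \<Rightarrow> bool" where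
  "H_entry nb dl L M p x r y c \<longleftrightarrow>
     nz_block nb dl L x y \<and> r < M \<and> c < M \<and> c = (r + p x y) mod M"

text \<open>Tanner graph: check nodes Inl (x,r), bit nodes Inr (y,c).\<close>
fun tanner_adj :: "nat \<Rightarrow> nat \<Rightarrow> nat \<Rightarrow> nat \<Rightarrow> (nat \<Rightarrow> nat \<Rightarrow> nat)
    \<Rightarrow> (nat \<times> nat) + (nat \<times> nat) \<Rightarrow> (nat \<times> nat) + (nat \<times> nat) \<Rightarrow> bool" where
  "tanner_adj nb dl L M p (Inl (x, r)) (Inr (y, c)) = H_entry nb dl L M p x r y c"
| "tanner_adj nb dl L M p (Inr (y, c)) (Inl (x, r)) = H_entry nb dl L M p x r y c"
| "tanner_adj nb dl L M p _ _ = False"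

definition is_cycle :: "('v \<Rightarrow> 'v \<Rightarrow> bool) \<Rightarrow> 'v list \<Rightarrow> bool" where
  "is_cycle adj vs \<longleftrightarrow> 3 \<le> length vs \<and> distinct vs \<and>
     (\<forall>i < length vs. adj (vs ! i) (vs ! ((i + 1) mod length vs)))"

definition reuse :: "nat \<Rightarrow> nat \<Rightarrow> nat \<Rightarrow> nat \<Rightarrow> (nat \<Rightarrow> nat \<Rightarrow> nat) \<Rightarrow> bool" where
  "reuse nb dl L T p \<longleftrightarrow> (\<forall>x y. nz_block nb dl L x y \<and> nz_block nb dl L (x + T) (y + T * nb)
      \<longrightarrow> p (x + T) (y + T * nb) = p x y)"

end

theory Submission
  imports Defs
begin

lemma tblk_k: "nb \<ge> 1 \<Longrightarrow> tblk nb (1 + k * nb) = k + 1"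
  unfolding tblk_def by (simp add: add.commute)

lemma modback: "(a::nat) \<le> M \<Longrightarrow> ((x + M - a) mod M + a) mod M = x mod M"
  by (simp add: mod_add_left_eq)

lemma cyc8:
  assumes "adj a b" "adj b c" "adj c d" "adj d e" "adj e f" "adj f g" "adj g h" "adj h a"
    "distinct [a,b,c,d,e,f,g,h]"
  shows "is_cycle adj [a,b,c,d,e,f,g,h]"
  unfolding is_cycle_def
proof (intro conjI allI impI)
  fix i assume "i < length [a,b,c,d,e,f,g,h]"
  then have "i=0 \<or> i=1 \<or> i=2 \<or> i=3 \<or> i=4 \<or> i=5 \<or> i=6 \<or> i=7" by simp presburger
  then show "adj ([a,b,c,d,e,f,g,h] ! i) ([a,b,c,d,e,f,g,h] ! ((i + 1) mod length [a,b,c,d,e,f,g,h]))"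
    using assms(1-8) by (elim disjE) simp_all
qed (use assms in simp_all)

lemma cyc4:
  assumes "adj a b" "adj b c" "adj c d" "adj d a" "distinct [a,b,c,d]"
  shows "is_cycle adj [a,b,c,d]"
  unfolding is_cycle_def
proof (intro conjI allI impI)
  fix i assume "i < length [a,b,c,d]"
  then have "i=0 \<or> i=1 \<or> i=2 \<or> i=3" by simp presburger
  then show "adj ([a,b,c,d] ! i) ([a,b,c,d] ! ((i + 1) mod length [a,b,c,d]))"
    using assms(1-4) by (elim disjE) simp_all
qed (use assms in simp_all)

theorem lemma2:
  fixes nb dl L M :: nat and p :: "nat \<Rightarrow> nat \<Rightarrow> nat"
  assumes "nb \<ge> 1" and "dl \<ge> 4" and "L \<ge> 4" and "M \<ge> 1"
    and "\<forall>x y. nz_block nb dl L x y \<longrightarrow> p x y < M"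
    and "reuse nb dl L 2 p"
  shows "\<exists>vs. is_cycle (tanner_adj nb dl L M p) vs \<and> length vs \<le> 8"
proof -
  note nb = assms(1) and dl = assms(2) and LL = assms(3) and M = assms(4)
  define y1 where "y1 = (1::nat)"
  define y2 where "y2 = 1 + nb"
  define y3 where "y3 = 1 + 2 * nb"
  define y4 where "y4 = 1 + nb + 2 * nb"
  have t1: "tblk nb y1 = 1" using tblk_k[OF nb, of 0] by (simp add: y1_def)
  have t2: "tblk nb y2 = 2" using tblk_k[OF nb, of 1] by (simp add: y2_def)
  have t3: "tblk nb y3 = 3" using tblk_k[OF nb, of 2] by (simp add: y3_def)
  have t4: "tblk nb y4 = 4" using tblk_k[OF nb, of 3] by (simp add: y4_def add.assoc)
  have nbL: "4 * nb \<le> nb * L" using LL by simp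
  have yb: "Suc (3*nb) \<le> nb*L" "Suc (2*nb) \<le> nb*L" "Suc nb \<le> nb*L" using nbL nb by linarith+
  have n41: "nz_block nb dl L 4 y1" and n21: "nz_block nb dl L 2 y1"
    and n22: "nz_block nb dl L 2 y2" and n42: "nz_block nb dl L 4 y2"
    and n43: "nz_block nb dl L 4 y3" and n63: "nz_block nb dl L 6 y3"
    and n64: "nz_block nb dl L 6 y4" and n44: "nz_block nb dl L 4 y4"
    unfolding nz_block_def using t1 t2 t3 t4 nb dl LL yb
    by (auto simp: y1_def y2_def y3_def y4_def)
  have R: "\<And>x y. nz_block nb dl L x y \<Longrightarrow> nz_block nb dl L (x + 2) (y + 2 * nb) \<Longrightarrow> p (x + 2) (y + 2 * nb) = p x y"
    using assms(6) unfolding reuse_def by blast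
  have e3: "y3 = y1 + 2 * nb" and e4: "y4 = y2 + 2 * nb" by (simp_all add: y1_def y2_def y3_def y4_def)
  have r1: "p 4 y3 = p 2 y1" using R[of 2 y1] n21 n43 unfolding e3 by simp
  have r2: "p 6 y3 = p 4 y1" using R[of 4 y1] n41 n63 unfolding e3 by simp
  have r3: "p 4 y4 = p 2 y2" using R[of 2 y2] n22 n44 unfolding e4 by simp
  have r4: "p 6 y4 = p 4 y2" using R[of 4 y2] n42 n64 unfolding e4 by simp
  define a4 where "a4 = p 4 y1"
  define a2 where "a2 = p 2 y1"
  define c2 where "c2 = p 2 y2"
  define c4 where "c4 = p 4 y2"
  have lt: "a4 < M" "a2 < M" "c2 < M" "c4 < M" using assms(5) n41 n21 n22 n42
    by (auto simp: a4_def a2_def c2_def c4_def)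
  define s where "s = (a4 + M - a2) mod M"
  define u where "u = (s + c2 + M - c4) mod M"
  define w where "w = (u + a2 + M - a4) mod M"
  have Mp: "0 < M" using M by simp
  have e2: "(s + a2) mod M = a4" using modback[of a2 M a4] lt by (simp add: s_def)
  have e4: "(u + c4) mod M = (s + c2) mod M" using modback[of c4 M "s + c2"] lt by (simp add: u_def)
  have e6: "(w + a4) mod M = (u + a2) mod M" using modback[of a4 M "u + a2"] lt by (simp add: w_def)
  have toint: "\<And>A B. ((A::nat) mod M = B mod M) = (int M dvd int A - int B)"
    by (metis mod_eq_dvd_iff of_nat_eq_iff zmod_int)
  have d2: "int M dvd int (s + a2) - int a4" using e2 toint[of "s + a2" a4] lt by simp
  have d4: "int M dvd int (u + c4) - int (s + c2)" using e4 toint by blast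
  have d6: "int M dvd int (w + a4) - int (u + a2)" using e6 toint by blast
  have "int M dvd (int (w + a4) - int (u + a2)) + (int (u + c4) - int (s + c2)) + (int (s + a2) - int a4)"
    using d2 d4 d6 by (intro dvd_add) 
  then have "int M dvd int (w + c4) - int c2" by (simp add: algebra_simps)
  then have e8: "(w + c4) mod M = c2" using toint[of "w + c4" c2] lt by simp
  have yd: "y1 \<noteq> y2" "y1 \<noteq> y3" "y1 \<noteq> y4" "y2 \<noteq> y3" "y2 \<noteq> y4" "y3 \<noteq> y4"
    using nb by (auto simp: y1_def y2_def y3_def y4_def)
  have sM: "s < M" "u < M" "w < M" using Mp by (auto simp: s_def u_def w_def)
  let ?G = "tanner_adj nb dl L M p"
  have A1: "?G (Inl (4,0)) (Inr (y1, a4))" using n41 lt Mp by (simp add: H_entry_def a4_def)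
  have A2: "?G (Inr (y1, a4)) (Inl (2, s))" using n21 lt sM e2 by (simp add: H_entry_def a2_def)
  have A3: "?G (Inl (2, s)) (Inr (y2, (s + c2) mod M))" using n22 sM Mp by (simp add: H_entry_def c2_def)
  have A4: "?G (Inr (y2, (s + c2) mod M)) (Inl (4, u))" using n42 sM Mp e4 by (simp add: H_entry_def c4_def)
  have A5: "?G (Inl (4, u)) (Inr (y3, (u + a2) mod M))" using n43 sM Mp r1 by (simp add: H_entry_def a2_def)
  have A6: "?G (Inr (y3, (u + a2) mod M)) (Inl (6, w))" using n63 sM Mp r2 e6 by (simp add: H_entry_def a4_def)
  have A7: "?G (Inl (6, w)) (Inr (y4, (w + c4) mod M))" using n64 sM Mp r4 by (simp add: H_entry_def c4_def)
  have A8: "?G (Inr (y4, (w + c4) mod M)) (Inl (4, 0))" using n44 sM Mp r3 e8 lt by (simp add: H_entry_def c2_def)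
  show ?thesis
  proof (cases "u = 0")
    case True
    have B4: "?G (Inr (y2, (s + c2) mod M)) (Inl (4, 0))" using A4 True by simp
    have "is_cycle ?G [Inl (4,0), Inr (y1, a4), Inl (2, s), Inr (y2, (s + c2) mod M)]"
      by (rule cyc4[where adj="tanner_adj nb dl L M p", OF A1 A2 A3 B4]) (use yd in simp)
    then show ?thesis by (intro exI[of _ "[Inl (4,0), Inr (y1, a4), Inl (2, s), Inr (y2, (s + c2) mod M)]"]) simp
  next
    case False
    have "is_cycle ?G [Inl (4,0), Inr (y1, a4), Inl (2, s), Inr (y2, (s + c2) mod M),
        Inl (4, u), Inr (y3, (u + a2) mod M), Inl (6, w), Inr (y4, (w + c4) mod M)]"
      by (rule cyc8[where adj="tanner_adj nb dl L M p", OF A1 A2 A3 A4 A5 A6 A7 A8]) (use yd False in simp)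
    then show ?thesis by (intro exI[of _ "[Inl (4,0), Inr (y1, a4), Inl (2, s), Inr (y2, (s + c2) mod M),
        Inl (4, u), Inr (y3, (u + a2) mod M), Inl (6, w), Inr (y4, (w + c4) mod M)]"]) simp
  qed
qed

end
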